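(* Assume the setting in the context (Condition ASM). Fix $c>1$, $\bar c=(c+1)/(c-1)$, let $\widehat\beta$ be a LASSO solution, $\widehat T=\mathrm{support}(\widehat\beta)$ and $\widehat m=|\widehat T\setminus T|$. If $\lambda\geqslant c\,n\|S\|_\infty$, then $$\sqrt{\widehat m}\leqslant\sqrt s\,\sqrt{\phi(\widehat m)}\,\frac{2\bar c}{\kappa_{\bar c}}+3(\bar c+1)\sqrt{\phi(\widehat m)}\,\frac{n c_s}{\lambda},$$ where $c_s=0$ in the parametric case $f_i=x_i'\beta_0$.
   Context: Condition ASM: observations $(y_i,z_i)$, $i=1,\dots,n$, $z_i$ fixed, $y_i=f(z_i)+\varepsilon_i$, $\varepsilon_i$ i.i.d. $N(0,\sigma^2)$; $f_i=f(z_i)$, $\mathbb{E}_n[a_i]=n^{-1}\sum_ia_i$; $x_i=P(z_i)\in\mathbb{R}^p$ (including a constant) with $\mathbb{E}_n[x_{ij}^2]=1$. $\beta_0$ is any solution of $\min_\beta\mathbb{E}_n[(f_i-x_i'\beta)^2]+\sigma^2\|\beta\|_0/n$; $s=\|\beta_0\|_0$, $T=\mathrm{support}(\beta_0)$, $c_s=\sqrt{\mathbb{E}_n[(f_i-x_i'\beta_0)^2]}\leqslant K\sigma\sqrt{s/n}$ for an absolute constant $K$. $\|\delta\|_{2,n}=\sqrt{\mathbb{E}_n[(x_i'\delta)^2]}$; $S=2\mathbb{E}_n[x_i\varepsilon_i]$; LASSO: $\widehat\beta\in\arg\min_\beta\mathbb{E}_n[(y_i-x_i'\beta)^2]+\frac\lambda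 n\|\beta\|_1$. $\delta_A$ is $\delta$ with entries outside $A$ set to zero. $\kappa_C=\min\{\sqrt s\|\delta\|_{2,n}/\|\delta_T\|_1:\|\delta_{T^c}\|_1\leqslant C\|\delta_T\|_1,\delta_T\neq0\}$. Maximal sparse eigenvalue: $\phi(m)=\max\{\|\delta\|_{2,n}^2/\|\delta\|^2:\delta\neq0,\|\delta_{T^c}\|_0\leqslant m\}$. *)

theory Defs
  imports "HOL-Analysis.Analysis"
begin

text \<open>Observations are indexed by i < n; regressors are indexed by a finite type 'p.
  x i j is the j-th component of x_i = P(z_i).\<close>

definition En :: "nat \<Rightarrow> (nat \<Rightarrow> real) \<Rightarrow> real" where
  "En n a = (\<Sum>i<n. a i) / real n"

definition xdot :: "(nat \<Rightarrow> 'p::finite \<Rightarrow> real) \<Rightarrow> nat \<Rightarrow> ('p \<Rightarrow> real) \<Rightarrow> real" where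
  "xdot x i b = (\<Sum>j\<in>UNIV. x i j * b j)"

definition norm2n :: "nat \<Rightarrow> (nat \<Rightarrow> 'p::finite \<Rightarrow> real) \<Rightarrow> ('p \<Rightarrow> real) \<Rightarrow> real" where
  "norm2n n x d = sqrt (En n (\<lambda>i. (xdot x i d)\<^sup>2))"

definition supp :: "('p \<Rightarrow> real) \<Rightarrow> 'p set" where
  "supp b = {j. b j \<noteq> 0}"

definition l1on :: "'p set \<Rightarrow> ('p \<Rightarrow> real) \<Rightarrow> real" where
  "l1on A b = (\<Sum>j\<in>A. \<bar>b j\<bar>)"

definition l1 :: "('p::finite \<Rightarrow> real) \<Rightarrow> real" where
  "l1 b = (\<Sum>j\<in>UNIV. \<bar>b j\<bar>)"

definition l2 :: "('p::finite \<Rightarrow> real) \<Rightarrow> real" where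
  "l2 b = sqrt (\<Sum>j\<in>UNIV. (b j)\<^sup>2)"

definition restr :: "'p set \<Rightarrow> ('p \<Rightarrow> real) \<Rightarrow> ('p \<Rightarrow> real)" where
  "restr A d = (\<lambda>j. if j \<in> A then d j else 0)"

text \<open>Restricted eigenvalue kappa_C (minimum written as an infimum).\<close>
definition kappa :: "nat \<Rightarrow> (nat \<Rightarrow> 'p::finite \<Rightarrow> real) \<Rightarrow> 'p set \<Rightarrow> real \<Rightarrow> real" where
  "kappa n x T C = Inf {sqrt (real (card T)) * norm2n n x d / l1on T d | d.
      l1on (- T) d \<le> C * l1on T d \<and> restr T d \<noteq> (\<lambda>_. 0)}"

text \<open>Maximal sparse eigenvalue phi(m) (maximum written as a supremum).\<close>
definition phi :: "nat \<Rightarrow> (nat \<Rightarrow> 'p::finite \<Rightarrow> real) \<Rightarrow> 'p set \<Rightarrow> nat \<Rightarrow> real" where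
  "phi n x T m = Sup {(norm2n n x d)\<^sup>2 / (l2 d)\<^sup>2 | d.
      d \<noteq> (\<lambda>_. 0) \<and> card (supp d - T) \<le> m}"

definition lasso_obj :: "nat \<Rightarrow> (nat \<Rightarrow> 'p::finite \<Rightarrow> real) \<Rightarrow> (nat \<Rightarrow> real) \<Rightarrow> real \<Rightarrow> ('p \<Rightarrow> real) \<Rightarrow> real" where
  "lasso_obj n x y lam b = En n (\<lambda>i. (y i - xdot x i b)\<^sup>2) + lam / real n * l1 b"

definition is_lasso :: "nat \<Rightarrow> (nat \<Rightarrow> 'p::finite \<Rightarrow> real) \<Rightarrow> (nat \<Rightarrow> real) \<Rightarrow> real \<Rightarrow> ('p \<Rightarrow> real) \<Rightarrow> bool" where
  "is_lasso n x y lam bh \<longleftrightarrow> (\<forall>b. lasso_obj n x y lam bh \<le> lasso_obj n x y lam b)"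

definition l0_obj :: "nat \<Rightarrow> (nat \<Rightarrow> 'p::finite \<Rightarrow> real) \<Rightarrow> (nat \<Rightarrow> real) \<Rightarrow> real \<Rightarrow> ('p \<Rightarrow> real) \<Rightarrow> real" where
  "l0_obj n x f sig b = En n (\<lambda>i. (f i - xdot x i b)\<^sup>2) + sig\<^sup>2 * real (card (supp b)) / real n"

definition is_l0_target :: "nat \<Rightarrow> (nat \<Rightarrow> 'p::finite \<Rightarrow> real) \<Rightarrow> (nat \<Rightarrow> real) \<Rightarrow> real \<Rightarrow> ('p \<Rightarrow> real) \<Rightarrow> bool" where
  "is_l0_target n x f sig b0 \<longleftrightarrow> (\<forall>b. l0_obj n x f sig b0 \<le> l0_obj n x f sig b)"

definition score :: "nat \<Rightarrow> (nat \<Rightarrow> 'p::finite \<Rightarrow> real) \<Rightarrow> (nat \<Rightarrow> real) \<Rightarrow> 'p \<Rightarrow> real" where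
  "score n x eps j = 2 * En n (\<lambda>i. x i j * eps i)"

definition supnorm :: "('p::finite \<Rightarrow> real) \<Rightarrow> real" where
  "supnorm v = Max (range (\<lambda>j. \<bar>v j\<bar>))"

end

theory Submission
  imports Defs
begin

lemma small_zero:
  fixes a b :: real
  assumes b: "b > 0" and h: "\<forall>t. \<bar>t\<bar> < b \<longrightarrow> 0 \<le> t * a + t\<^sup>2"
  shows "a = 0"
proof (rule ccontr)
  assume a: "a \<noteq> 0"
  define e where "e = min \<bar>a\<bar> b / 2"
  have e: "e > 0" "e < b" "e < \<bar>a\<bar>" using a b by (auto simp: e_def)
  define t where "t = - sgn a * e"
  have "\<bar>t\<bar> = e" using a e by (simp add: t_def abs_mult)
  hence "0 \<le> t * a + t\<^sup>2" using h e by auto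
  moreover have "t * a + t\<^sup>2 = e * (e - \<bar>a\<bar>)"
    using a by (cases "a > 0") (auto simp: t_def power2_eq_square algebra_simps)
  moreover have "e * (e - \<bar>a\<bar>) < 0" using e by (simp add: mult_pos_neg)
  ultimately show False by linarith
qed

lemma En_add: "En n (\<lambda>i. a i + b i) = En n a + En n b"
  by (simp add: En_def sum.distrib add_divide_distrib)
lemma En_diff: "En n (\<lambda>i. a i - b i) = En n a - En n b"
  by (simp add: En_def sum_subtractf diff_divide_distrib)
lemma En_cmult: "En n (\<lambda>i. k * a i) = k * En n a"
  by (simp add: En_def sum_distrib_left)
lemma En_cmult2: "En n (\<lambda>i. a i * k) = En n a * k"
  by (simp add: En_def sum_distrib_right)
lemma En_cong: "(\<And>i. i < n \<Longrightarrow> a i = b i) \<Longrightarrow> En n a = En n b"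
  by (simp add: En_def)
lemma En_sq_nonneg: "En n (\<lambda>i. (a i)\<^sup>2) \<ge> 0"
  by (simp add: En_def sum_nonneg)
lemma En_sum: "finite A \<Longrightarrow> En n (\<lambda>i. \<Sum>j\<in>A. g j i) = (\<Sum>j\<in>A. En n (g j))"
  by (simp add: En_def sum.swap[of _ A] sum_divide_distrib)

lemma En_CS:
  assumes n: "n > 0"
  shows "\<bar>En n (\<lambda>i. a i * b i)\<bar> \<le> sqrt (En n (\<lambda>i. (a i)\<^sup>2)) * sqrt (En n (\<lambda>i. (b i)\<^sup>2))"
proof -
  have "\<bar>\<Sum>i<n. a i * b i\<bar> \<le> (\<Sum>i<n. \<bar>a i\<bar> * \<bar>b i\<bar>)"
    by (metis (no_types, lifting) abs_mult sum.cong sum_abs)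
  also have "\<dots> \<le> L2_set a {..<n} * L2_set b {..<n}" by (rule L2_set_mult_ineq)
  finally have 1: "\<bar>\<Sum>i<n. a i * b i\<bar> \<le> L2_set a {..<n} * L2_set b {..<n}" .
  have "sqrt (En n (\<lambda>i. (a i)\<^sup>2)) * sqrt (En n (\<lambda>i. (b i)\<^sup>2))
      = L2_set a {..<n} * L2_set b {..<n} / real n"
    using n by (simp add: En_def L2_set_def real_sqrt_divide real_sqrt_mult[symmetric])
  moreover have "\<bar>En n (\<lambda>i. a i * b i)\<bar> = \<bar>\<Sum>i<n. a i * b i\<bar> / real n"
    by (simp add: En_def)
  ultimately show ?thesis using 1 n by (simp add: divide_right_mono)
qed

lemma En_Mink:
  shows "sqrt (En n (\<lambda>i. (a i + b i)\<^sup>2)) \<le> sqrt (En n (\<lambda>i. (a i)\<^sup>2)) + sqrt (En n (\<lambda>i. (b i)\<^sup>2))"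
proof -
  have e: "sqrt (En n (\<lambda>i. (g i)\<^sup>2)) = L2_set g {..<n} / sqrt (real n)" for g
    by (simp add: En_def L2_set_def real_sqrt_divide)
  show ?thesis unfolding e
    using L2_set_triangle_ineq[of a b "{..<n}"]
    by (simp add: add_divide_distrib[symmetric] divide_right_mono)
qed

lemma xdot_add: "xdot x i (\<lambda>j. a j + b j) = xdot x i a + xdot x i b"
  by (simp add: xdot_def distrib_left sum.distrib)
lemma xdot_diff: "xdot x i (\<lambda>j. a j - b j) = xdot x i a - xdot x i b"
  by (simp add: xdot_def right_diff_distrib sum_subtractf)
lemma xdot_unit: "xdot x i (\<lambda>k. if k = j then t else 0) = t * x i j"
  by (simp add: xdot_def if_distrib cong: if_cong)

lemma l1_upd: "l1 (\<lambda>k. b k + (if k = j then t else 0)) = l1 b - \<bar>b j\<bar> + \<bar>b j + t\<bar>"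
proof -
  have "l1 (\<lambda>k. b k + (if k = j then t else 0)) = \<bar>b j + t\<bar> + (\<Sum>k\<in>UNIV - {j}. \<bar>b k\<bar>)"
    unfolding l1_def by (subst sum.remove[of UNIV j]) auto
  moreover have "l1 b = \<bar>b j\<bar> + (\<Sum>k\<in>UNIV - {j}. \<bar>b k\<bar>)"
    unfolding l1_def by (subst sum.remove[of UNIV j]) auto
  ultimately show ?thesis by simp
qed

lemma kkt:
  fixes x :: "nat \<Rightarrow> 'p::finite \<Rightarrow> real"
  assumes n: "n > 0" and nj: "En n (\<lambda>i. (x i j)\<^sup>2) = 1"
    and lasso: "is_lasso n x y lam bh" and lam: "lam \<ge> 0" and bj: "bh j \<noteq> 0"
  shows "\<bar>2 * En n (\<lambda>i. x i j * (y i - xdot x i bh))\<bar> = lam / real n"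
proof -
  define u where "u i = y i - xdot x i bh" for i
  define G where "G = 2 * En n (\<lambda>i. x i j * u i)"
  define L where "L = lam / real n"
  have L0: "L \<ge> 0" using lam by (simp add: L_def)
  have key: "0 \<le> - t * G + t\<^sup>2 + L * (\<bar>bh j + t\<bar> - \<bar>bh j\<bar>)" for t
  proof -
    define b where "b = (\<lambda>k. bh k + (if k = j then t else 0))"
    have xb: "xdot x i b = xdot x i bh + t * x i j" for i
      unfolding b_def xdot_add xdot_unit ..
    have "En n (\<lambda>i. (y i - xdot x i b)\<^sup>2) = En n (\<lambda>i. (u i)\<^sup>2 - t * (2 * (x i j * u i)) + t\<^sup>2 * (x i j)\<^sup>2)"
      unfolding xb u_def by (rule En_cong) (simp add: power2_eq_square algebra_simps)
    also have "\<dots> = En n (\<lambda>i. (u i)\<^sup>2) - t * G + t\<^sup>2"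
      by (simp add: En_add En_diff En_cmult nj G_def)
    finally have e1: "En n (\<lambda>i. (y i - xdot x i b)\<^sup>2) = En n (\<lambda>i. (u i)\<^sup>2) - t * G + t\<^sup>2" .
    have l1b: "l1 b = l1 bh - \<bar>bh j\<bar> + \<bar>bh j + t\<bar>" by (simp add: b_def l1_upd)
    have o1: "lasso_obj n x y lam bh = En n (\<lambda>i. (u i)\<^sup>2) + L * l1 bh"
      by (simp add: lasso_obj_def u_def L_def)
    have o2: "lasso_obj n x y lam b = En n (\<lambda>i. (u i)\<^sup>2) - t * G + t\<^sup>2 + L * (l1 bh - \<bar>bh j\<bar> + \<bar>bh j + t\<bar>)"
      by (simp add: lasso_obj_def e1 l1b L_def)
    have "lasso_obj n x y lam bh \<le> lasso_obj n x y lam b" using lasso by (simp add: is_lasso_def)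
    hence "En n (\<lambda>i. (u i)\<^sup>2) + L * l1 bh \<le> En n (\<lambda>i. (u i)\<^sup>2) - t * G + t\<^sup>2 + L * (l1 bh - \<bar>bh j\<bar> + \<bar>bh j + t\<bar>)"
      unfolding o1 o2 .
    thus ?thesis by (simp add: algebra_simps)
  qed
  show ?thesis
  proof (cases "bh j > 0")
    case True
    have "\<forall>t. \<bar>t\<bar> < bh j \<longrightarrow> 0 \<le> t * (L - G) + t\<^sup>2"
    proof (intro allI impI)
      fix t assume "\<bar>t\<bar> < bh j"
      hence "\<bar>bh j + t\<bar> - \<bar>bh j\<bar> = t" using True by auto
      thus "0 \<le> t * (L - G) + t\<^sup>2" using key[of t] by (simp add: algebra_simps)
    qed
    hence "L - G = 0" using small_zero True by blast
    thus ?thesis using L0 by (simp add: G_def L_def u_def)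
  next
    case False
    hence neg: "bh j < 0" using bj by simp
    have "\<forall>t. \<bar>t\<bar> < - bh j \<longrightarrow> 0 \<le> t * (- L - G) + t\<^sup>2"
    proof (intro allI impI)
      fix t assume "\<bar>t\<bar> < - bh j"
      hence f: "\<bar>bh j + t\<bar> - \<bar>bh j\<bar> = - t" using neg by auto
      show "0 \<le> t * (- L - G) + t\<^sup>2" using key[of t, unfolded f] by (simp add: algebra_simps)
    qed
    hence "- L - G = 0" using small_zero[of "- bh j" "- L - G"] neg by (meson neg_0_less_iff_less)
    thus ?thesis using L0 by (simp add: G_def L_def u_def)
  qed
qed

lemma norm2n_bound:
  fixes x :: "nat \<Rightarrow> 'p::finite \<Rightarrow> real"
  assumes nrm: "\<And>j. En n (\<lambda>i. (x i j)\<^sup>2) = 1"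
  shows "(norm2n n x d)\<^sup>2 / (l2 d)\<^sup>2 \<le> real CARD('p)"
proof -
  have cs: "(xdot x i d)\<^sup>2 \<le> (\<Sum>j\<in>UNIV. (x i j)\<^sup>2) * (\<Sum>j\<in>UNIV. (d j)\<^sup>2)" for i
  proof -
    have "\<bar>xdot x i d\<bar> \<le> (\<Sum>j\<in>UNIV. \<bar>x i j\<bar> * \<bar>d j\<bar>)"
      unfolding xdot_def by (metis (no_types, lifting) abs_mult sum.cong sum_abs)
    also have "\<dots> \<le> L2_set (x i) UNIV * L2_set d UNIV" by (rule L2_set_mult_ineq)
    finally have "\<bar>xdot x i d\<bar> \<le> L2_set (x i) UNIV * L2_set d UNIV" .
    hence "\<bar>xdot x i d\<bar>\<^sup>2 \<le> (L2_set (x i) UNIV * L2_set d UNIV)\<^sup>2"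
      by (rule power_mono) simp
    thus ?thesis by (simp add: power_mult_distrib L2_set_def sum_nonneg)
  qed
  have "(norm2n n x d)\<^sup>2 = En n (\<lambda>i. (xdot x i d)\<^sup>2)"
    by (simp add: norm2n_def En_sq_nonneg)
  also have "\<dots> \<le> En n (\<lambda>i. (\<Sum>j\<in>UNIV. (x i j)\<^sup>2) * (\<Sum>j\<in>UNIV. (d j)\<^sup>2))"
    unfolding En_def by (intro divide_right_mono sum_mono cs) simp
  also have "\<dots> = (\<Sum>j\<in>UNIV. En n (\<lambda>i. (x i j)\<^sup>2)) * (\<Sum>j\<in>UNIV. (d j)\<^sup>2)"
    by (simp add: En_cmult2 En_sum)
  also have "\<dots> = real CARD('p) * (l2 d)\<^sup>2"
    by (simp add: nrm l2_def sum_nonneg)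
  finally have h: "(norm2n n x d)\<^sup>2 \<le> real CARD('p) * (l2 d)\<^sup>2" .
  show ?thesis
  proof (cases "l2 d = 0")
    case True thus ?thesis by simp
  next
    case False thus ?thesis using h by (simp add: divide_le_eq)
  qed
qed

lemma l1_split: "l1 (b :: 'p::finite \<Rightarrow> real) = l1on T b + l1on (- T) b"
proof -
  have "UNIV = T \<union> - T" by auto
  hence "l1 b = (\<Sum>j\<in>T \<union> - T. \<bar>b j\<bar>)" by (simp add: l1_def)
  also have "\<dots> = l1on T b + l1on (- T) b"
    by (subst sum.union_disjoint) (auto simp: l1on_def)
  finally show ?thesis .
qed

lemma phi_ge:
  fixes x :: "nat \<Rightarrow> 'p::finite \<Rightarrow> real"
  assumes nrm: "\<And>j. En n (\<lambda>i. (x i j)\<^sup>2) = 1"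
    and d: "d \<noteq> (\<lambda>_. 0)" "card (supp d - T) \<le> m"
  shows "(norm2n n x d)\<^sup>2 / (l2 d)\<^sup>2 \<le> phi n x T m"
  unfolding phi_def
proof (rule cSup_upper)
  show "(norm2n n x d)\<^sup>2 / (l2 d)\<^sup>2 \<in> {(norm2n n x d)\<^sup>2 / (l2 d)\<^sup>2 | d.
      d \<noteq> (\<lambda>_. 0) \<and> card (supp d - T) \<le> m}" using d by blast
  show "bdd_above {(norm2n n x d)\<^sup>2 / (l2 d)\<^sup>2 | d. d \<noteq> (\<lambda>_. 0) \<and> card (supp d - T) \<le> m}"
    by (rule bdd_aboveI[of _ "real CARD('p)"]) (auto intro: norm2n_bound[OF nrm])
qed

lemma kappa_le:
  fixes x :: "nat \<Rightarrow> 'p::finite \<Rightarrow> real"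
  assumes "l1on (- T) d \<le> C * l1on T d" "restr T d \<noteq> (\<lambda>_. 0)"
  shows "kappa n x T C \<le> sqrt (real (card T)) * norm2n n x d / l1on T d"
  unfolding kappa_def
proof (rule cInf_lower)
  show "sqrt (real (card T)) * norm2n n x d / l1on T d \<in> {sqrt (real (card T)) * norm2n n x d / l1on T d | d.
      l1on (- T) d \<le> C * l1on T d \<and> restr T d \<noteq> (\<lambda>_. 0)}" using assms by blast
  show "bdd_below {sqrt (real (card T)) * norm2n n x d / l1on T d | d.
      l1on (- T) d \<le> C * l1on T d \<and> restr T d \<noteq> (\<lambda>_. 0)}"
    by (rule bdd_belowI[of _ 0]) (auto simp: norm2n_def l1on_def En_sq_nonneg intro!: sum_nonneg divide_nonneg_nonneg)
qed

lemma En_xdot_swap: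
  fixes x :: "nat \<Rightarrow> 'p::finite \<Rightarrow> real"
  shows "En n (\<lambda>i. e i * xdot x i d) = (\<Sum>j\<in>UNIV. d j * En n (\<lambda>i. x i j * e i))"
proof -
  have "En n (\<lambda>i. e i * xdot x i d) = En n (\<lambda>i. \<Sum>j\<in>UNIV. d j * (x i j * e i))"
    by (simp add: xdot_def sum_distrib_left mult_ac)
  also have "\<dots> = (\<Sum>j\<in>UNIV. En n (\<lambda>i. d j * (x i j * e i)))" by (rule En_sum) simp
  also have "\<dots> = (\<Sum>j\<in>UNIV. d j * En n (\<lambda>i. x i j * e i))" by (simp add: En_cmult)
  finally show ?thesis .
qed

theorem lemma5:
  fixes n :: nat and x :: "nat \<Rightarrow> 'p::finite \<Rightarrow> real"
    and f eps y :: "nat \<Rightarrow> real"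
    and sig K c lam :: real
    and beta0 betah :: "'p \<Rightarrow> real"
  assumes n_pos: "n > 0"
    and model: "\<And>i. i < n \<Longrightarrow> y i = f i + eps i"
    and const: "\<exists>j. \<forall>i<n. x i j = 1"
    and normalized: "\<And>j. En n (\<lambda>i. (x i j)\<^sup>2) = 1"
    and sigma_pos: "sig > 0"
    and l0_target: "is_l0_target n x f sig beta0"
    and K_nonneg: "K \<ge> 0"
    and cs_bound: "sqrt (En n (\<lambda>i. (f i - xdot x i beta0)\<^sup>2))
                     \<le> K * sig * sqrt (real (card (supp beta0)) / real n)"
    and c_gt: "c > 1"
    and lam_pos: "lam > 0"
    and lasso: "is_lasso n x y lam betah"
    and lam_ge: "lam \<ge> c * real n * supnorm (score n x eps)"
    and kappa_pos: "supp beta0 \<noteq> {} \<longrightarrow> kappa n x (supp beta0) ((c + 1) / (c - 1)) > 0"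
  shows "let s = card (supp beta0); T = supp beta0;
             cbar = (c + 1) / (c - 1);
             cs = sqrt (En n (\<lambda>i. (f i - xdot x i beta0)\<^sup>2));
             mh = card (supp betah - T)
         in sqrt (real mh) \<le>
              sqrt (real s) * sqrt (phi n x T mh) * (2 * cbar / kappa n x T cbar)
              + 3 * (cbar + 1) * sqrt (phi n x T mh) * (real n * cs / lam)"
proof -
  define T where "T = supp beta0"
  define s where "s = card T"
  define cbar where "cbar = (c + 1) / (c - 1)"
  define r where "r i = f i - xdot x i beta0" for i
  define cs where "cs = sqrt (En n (\<lambda>i. (r i)\<^sup>2))"
  define J where "J = supp betah - T"
  define m where "m = card J"
  define \<delta> where "\<delta> j = betah j - beta0 j" for j
  define \<nu> where "\<nu> = norm2n n x \<delta>"
  define S where "S = score n x eps"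
  define Smax where "Smax = supnorm S"
  define L where "L = lam / real n"
  define \<kappa> where "\<kappa> = kappa n x T cbar"
  define A where "A = l1on T \<delta>"
  define B where "B = l1on (- T) \<delta>"
  have c0: "c > 0" using c_gt by simp
  have L0: "L > 0" using lam_pos n_pos by (simp add: L_def)
  have Sj: "\<bar>S j\<bar> \<le> Smax" for j
    unfolding Smax_def supnorm_def by (rule Max_ge) auto
  have Smax_le: "Smax \<le> L / c"
  proof -
    have cn: "c * real n > 0" using c0 n_pos by simp
    have "Smax * (c * real n) \<le> lam" using lam_ge by (simp add: Smax_def S_def mult_ac)
    hence "Smax \<le> lam / (c * real n)" using cn by (simp add: pos_le_divide_eq)
    thus ?thesis by (simp add: L_def divide_divide_eq_left mult.commute)
  qed
  have cs0: "cs \<ge> 0" by (simp add: cs_def En_sq_nonneg)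
  have \<nu>0: "\<nu> \<ge> 0" by (simp add: \<nu>_def norm2n_def En_sq_nonneg)
  have A0: "A \<ge> 0" and B0: "B \<ge> 0" by (auto simp: A_def B_def l1on_def intro: sum_nonneg)
  have b0out: "beta0 j = 0" if "j \<notin> T" for j using that by (simp add: T_def supp_def)
  have bh_eq: "betah = (\<lambda>j. beta0 j + \<delta> j)" by (simp add: \<delta>_def)
  have xbh: "xdot x i betah = xdot x i beta0 + xdot x i \<delta>" for i
    by (subst bh_eq) (rule xdot_add)
  have basic: "\<nu>\<^sup>2 - 2 * cs * \<nu> \<le> L * ((1 + 1 / c) * A - (1 - 1 / c) * B)"
  proof -
    define xd where "xd i = xdot x i \<delta>" for i
    have "En n (\<lambda>i. (y i - xdot x i betah)\<^sup>2)
        = En n (\<lambda>i. (eps i + r i)\<^sup>2 - 2 * (eps i * xd i) - 2 * (r i * xd i) + (xd i)\<^sup>2)"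
      by (rule En_cong) (simp add: model xbh r_def xd_def power2_eq_square algebra_simps)
    also have "\<dots> = En n (\<lambda>i. (eps i + r i)\<^sup>2) - 2 * En n (\<lambda>i. eps i * xd i)
         - 2 * En n (\<lambda>i. r i * xd i) + \<nu>\<^sup>2"
      by (simp add: En_add En_diff En_cmult \<nu>_def norm2n_def En_sq_nonneg xd_def)
    finally have e1: "En n (\<lambda>i. (y i - xdot x i betah)\<^sup>2) = En n (\<lambda>i. (eps i + r i)\<^sup>2) - 2 * En n (\<lambda>i. eps i * xd i)
         - 2 * En n (\<lambda>i. r i * xd i) + \<nu>\<^sup>2" .
    have e2: "En n (\<lambda>i. (y i - xdot x i beta0)\<^sup>2) = En n (\<lambda>i. (eps i + r i)\<^sup>2)"
      by (rule En_cong) (simp add: model r_def algebra_simps)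
    have "lasso_obj n x y lam betah \<le> lasso_obj n x y lam beta0"
      using lasso by (simp add: is_lasso_def)
    hence ineq: "\<nu>\<^sup>2 \<le> 2 * En n (\<lambda>i. eps i * xd i) + 2 * En n (\<lambda>i. r i * xd i) + L * (l1 beta0 - l1 betah)"
      unfolding lasso_obj_def e1 e2 by (simp add: L_def algebra_simps)
    have "2 * En n (\<lambda>i. eps i * xd i) = (\<Sum>j\<in>UNIV. \<delta> j * S j)"
      unfolding xd_def En_xdot_swap by (simp add: S_def score_def sum_distrib_left mult_ac)
    also have "\<dots> \<le> (\<Sum>j\<in>UNIV. \<bar>\<delta> j\<bar> * Smax)"
    proof -
      have "(\<Sum>j\<in>UNIV. \<delta> j * S j) \<le> (\<Sum>j\<in>UNIV. \<bar>\<delta> j * S j\<bar>)" by (rule sum_mono) simp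
      also have "\<dots> \<le> (\<Sum>j\<in>UNIV. \<bar>\<delta> j\<bar> * Smax)"
        by (rule sum_mono) (simp add: abs_mult mult_left_mono Sj)
      finally show ?thesis .
    qed
    also have "\<dots> = Smax * (A + B)"
      using l1_split[of \<delta> T] by (simp add: A_def B_def l1_def sum_distrib_left[symmetric] mult.commute)
    also have "\<dots> \<le> L / c * (A + B)" using mult_right_mono[OF Smax_le, of "A + B"] A0 B0 by simp
    finally have t1: "2 * En n (\<lambda>i. eps i * xd i) \<le> L / c * (A + B)" .
    have "En n (\<lambda>i. r i * xd i) \<le> cs * \<nu>"
      using En_CS[OF n_pos, of r xd] by (simp add: cs_def \<nu>_def norm2n_def xd_def)
    hence t2: "2 * En n (\<lambda>i. r i * xd i) \<le> 2 * cs * \<nu>" by simp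
    have t3: "l1 beta0 - l1 betah \<le> A - B"
    proof -
      have o1: "l1on (- T) beta0 = 0" by (simp add: l1on_def b0out)
      have o2: "l1on (- T) betah = B" by (simp add: B_def l1on_def \<delta>_def b0out)
      have o3: "l1on T beta0 - l1on T betah \<le> A"
      proof -
        have "l1on T beta0 \<le> (\<Sum>j\<in>T. \<bar>betah j\<bar> + \<bar>\<delta> j\<bar>)"
          unfolding l1on_def by (rule sum_mono) (simp add: \<delta>_def)
        thus ?thesis by (simp add: sum.distrib l1on_def A_def)
      qed
      show ?thesis using l1_split[of beta0 T] l1_split[of betah T] o1 o2 o3 by linarith
    qed
    have "L * (l1 beta0 - l1 betah) \<le> L * (A - B)" using t3 L0 by (simp add: mult_left_mono)
    hence "\<nu>\<^sup>2 \<le> L / c * (A + B) + 2 * cs * \<nu> + L * (A - B)" using ineq t1 t2 by linarith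
    moreover have "L * ((1 + 1 / c) * A - (1 - 1 / c) * B) = L / c * (A + B) + L * (A - B)"
      by (simp add: algebra_simps add_divide_distrib)
    ultimately show ?thesis by linarith
  qed
  have kpos: "T \<noteq> {} \<Longrightarrow> \<kappa> > 0" using kappa_pos by (simp add: \<kappa>_def T_def cbar_def)
  have sk0: "sqrt (real s) / \<kappa> \<ge> 0"
  proof (cases "T = {}")
    case True thus ?thesis by (simp add: s_def)
  next
    case False thus ?thesis using kpos by simp
  qed
  have D: "\<nu> \<le> 2 * cs + (1 + 1 / c) * L * (sqrt (real s) / \<kappa>)"
  proof (cases "\<nu> \<le> 2 * cs")
    case True
    have "0 \<le> (1 + 1 / c) * L * (sqrt (real s) / \<kappa>)" by (rule mult_nonneg_nonneg[OF mult_nonneg_nonneg]) (use c0 L0 sk0 in auto)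
    thus ?thesis using True by linarith
  next
    case False
    hence \<nu>pos: "\<nu> > 0" using cs0 by linarith
    have "\<nu>\<^sup>2 - 2 * cs * \<nu> = \<nu> * (\<nu> - 2 * cs)" by (simp add: power2_eq_square algebra_simps)
    also have "\<dots> > 0" using False \<nu>pos by simp
    finally have pos: "0 < L * ((1 + 1 / c) * A - (1 - 1 / c) * B)" using basic by linarith
    hence pos2: "(1 - 1 / c) * B < (1 + 1 / c) * A" using L0 by (simp add: zero_less_mult_iff)
    have cm: "1 - 1 / c > 0" using c_gt by simp
    have "(1 - 1 / c) * B \<ge> 0" using cm B0 by simp
    hence "(1 + 1 / c) * A > 0" using pos2 by linarith
    moreover have "1 + 1 / c > 0" using c0 by (simp add: add_pos_pos)
    ultimately have Apos: "A > 0" by (simp add: zero_less_mult_iff)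
    have cone: "B \<le> cbar * A"
    proof -
      have e1: "c * (1 - 1 / c) = c - 1" using c0 by (simp add: right_diff_distrib)
      have e2: "c * (1 + 1 / c) = c + 1" using c0 by (simp add: distrib_left)
      have "(c * (1 - 1 / c)) * B < (c * (1 + 1 / c)) * A"
        using mult_strict_left_mono[OF pos2 c0] by (simp only: mult.assoc)
      hence "(c - 1) * B < (c + 1) * A" unfolding e1 e2 .
      hence "B * (c - 1) < (c + 1) * A" by (simp add: mult.commute)
      hence "B < (c + 1) * A / (c - 1)" using c_gt by (simp add: pos_less_divide_eq)
      thus ?thesis by (simp add: cbar_def)
    qed
    have Tne: "T \<noteq> {}" using Apos by (auto simp: A_def l1on_def)
    have rne: "restr T \<delta> \<noteq> (\<lambda>_. 0)"
    proof
      assume "restr T \<delta> = (\<lambda>_. 0)"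
      hence "\<delta> j = 0" if "j \<in> T" for j using that unfolding restr_def
        by (metis (mono_tags, lifting))
      hence "A = 0" by (simp add: A_def l1on_def)
      thus False using Apos by simp
    qed
    have kle: "\<kappa> \<le> sqrt (real s) * \<nu> / A"
      unfolding \<kappa>_def s_def \<nu>_def A_def
      by (rule kappa_le) (use cone in \<open>simp_all add: A_def B_def rne\<close>)
    have k: "\<kappa> > 0" using kpos Tne by simp
    have Ale: "A \<le> sqrt (real s) * \<nu> / \<kappa>"
    proof -
      have "\<kappa> * A \<le> sqrt (real s) * \<nu>" using kle Apos by (simp add: pos_le_divide_eq)
      thus ?thesis using k by (simp add: pos_le_divide_eq mult.commute)
    qed
    have "\<nu> * (\<nu> - 2 * cs) \<le> L * (1 + 1 / c) * A"
    proof -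
      have "L * ((1 + 1 / c) * A - (1 - 1 / c) * B) \<le> L * ((1 + 1 / c) * A)"
        using L0 cm B0 by (simp add: mult_left_mono)
      thus ?thesis using basic \<open>\<nu>\<^sup>2 - 2 * cs * \<nu> = \<nu> * (\<nu> - 2 * cs)\<close> by (simp add: mult_ac)
    qed
    also have "\<dots> \<le> L * (1 + 1 / c) * (sqrt (real s) * \<nu> / \<kappa>)"
      by (rule mult_left_mono[OF Ale]) (use L0 c0 in \<open>simp add: add_pos_pos less_imp_le\<close>)
    also have "\<dots> = \<nu> * ((1 + 1 / c) * L * (sqrt (real s) / \<kappa>))" by (simp add: mult_ac)
    finally have "\<nu> - 2 * cs \<le> (1 + 1 / c) * L * (sqrt (real s) / \<kappa>)"
      using \<nu>pos by (metis mult_le_cancel_left_pos)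
    thus ?thesis by linarith
  qed
  define P where "P = phi n x T m"
  have cbar0: "cbar > 0" using c_gt by (simp add: cbar_def)
  have fin: "sqrt (real m) \<le> sqrt (real s) * sqrt P * (2 * cbar / \<kappa>)
              + 3 * (cbar + 1) * sqrt P * (real n * cs / lam)"
  proof (cases "m = 0")
    case True
    show ?thesis
    proof (cases "T = {}")
      case True
      have "cs \<le> 0" using cs_bound True by (simp add: cs_def r_def T_def)
      hence "cs = 0" using cs0 by simp
      thus ?thesis using True \<open>m = 0\<close> by (simp add: s_def)
    next
      case False
      then obtain j where j: "j \<in> T" by auto
      define d where "d = (\<lambda>k. if k = j then (1::real) else 0)"
      have nd: "d \<noteq> (\<lambda>_. 0)" by (auto simp: d_def fun_eq_iff)
      have sd: "supp d - T = {}" using j by (auto simp: d_def supp_def)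
      have "(norm2n n x d)\<^sup>2 / (l2 d)\<^sup>2 \<le> P"
        unfolding P_def by (rule phi_ge[where x=x and n=n, OF normalized nd]) (simp add: sd)
      moreover have "(norm2n n x d)\<^sup>2 / (l2 d)\<^sup>2 \<ge> 0" by simp
      ultimately have P0: "P \<ge> 0" by linarith
      have k: "\<kappa> > 0" using kpos False by simp
      have "0 \<le> sqrt (real s) * sqrt P * (2 * cbar / \<kappa>)"
        using P0 k cbar0 by simp
      moreover have "0 \<le> 3 * (cbar + 1) * sqrt P * (real n * cs / lam)"
        using P0 cbar0 cs0 lam_pos by simp
      ultimately show ?thesis using \<open>m = 0\<close> by simp
    qed
  next
    case False
    hence mpos: "m > 0" by simp
    define w where "w i = r i - xdot x i \<delta>" for i
    define v where "v j = 2 * En n (\<lambda>i. x i j * w i)" for j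
    have cm: "1 - 1 / c > 0" using c_gt by simp
    define M where "M = L * (1 - 1 / c)"
    have M0: "M > 0" using L0 cm by (simp add: M_def)
    have vJ: "\<bar>v j\<bar> \<ge> M" if j: "j \<in> J" for j
    proof -
      have bj: "betah j \<noteq> 0" using j by (simp add: J_def supp_def)
      have kk: "\<bar>2 * En n (\<lambda>i. x i j * (y i - xdot x i betah))\<bar> = L"
        using kkt[OF n_pos normalized lasso _ bj] lam_pos by (simp add: L_def)
      have "2 * En n (\<lambda>i. x i j * (y i - xdot x i betah)) = 2 * En n (\<lambda>i. x i j * eps i + x i j * w i)"
        by (rule arg_cong[where f = "\<lambda>z. 2 * z"], rule En_cong)
           (simp add: model xbh w_def r_def algebra_simps)
      also have "\<dots> = S j + v j" by (simp add: En_add S_def score_def v_def)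
      finally have "\<bar>S j + v j\<bar> = L" using kk by simp
      hence "L \<le> \<bar>S j\<bar> + \<bar>v j\<bar>" by linarith
      hence "L - L / c \<le> \<bar>v j\<bar>" using Sj[of j] Smax_le by linarith
      thus ?thesis by (simp add: M_def right_diff_distrib)
    qed
    define \<alpha> where "\<alpha> j = (if j \<in> J then v j else 0)" for j
    define Q where "Q = l2 \<alpha>"
    have finJ: "finite J" by simp
    have Q2: "Q\<^sup>2 = (\<Sum>j\<in>J. (v j)\<^sup>2)"
    proof -
      have "Q\<^sup>2 = (\<Sum>j\<in>UNIV. (\<alpha> j)\<^sup>2)" by (simp add: Q_def l2_def sum_nonneg)
      also have "\<dots> = (\<Sum>j\<in>UNIV. if j \<in> J then (v j)\<^sup>2 else 0)"
        by (rule sum.cong) (auto simp: \<alpha>_def)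
      also have "\<dots> = (\<Sum>j\<in>J. (v j)\<^sup>2)" by (simp add: sum.If_cases)
      finally show ?thesis .
    qed
    have "(\<Sum>j\<in>J. M\<^sup>2) \<le> (\<Sum>j\<in>J. (v j)\<^sup>2)"
    proof (rule sum_mono)
      fix j assume "j \<in> J"
      hence "M \<le> \<bar>v j\<bar>" by (rule vJ)
      hence "M\<^sup>2 \<le> \<bar>v j\<bar>\<^sup>2" using M0 by (intro power_mono) auto
      thus "M\<^sup>2 \<le> (v j)\<^sup>2" by simp
    qed
    hence lowQ: "real m * M\<^sup>2 \<le> Q\<^sup>2" by (simp add: Q2 m_def)
    have Q0: "Q \<ge> 0" by (simp add: Q_def l2_def sum_nonneg)
    have Qpos: "Q > 0"
    proof -
      have "real m * M\<^sup>2 > 0" using mpos M0 by simp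
      hence "Q\<^sup>2 > 0" using lowQ by linarith
      thus ?thesis using Q0 by (simp add: less_le)
    qed
    have sqm: "sqrt (real m) * M \<le> Q"
    proof -
      have "sqrt (real m * M\<^sup>2) \<le> sqrt (Q\<^sup>2)" using lowQ by (rule real_sqrt_le_mono)
      thus ?thesis using M0 Q0 by (simp add: real_sqrt_mult)
    qed
    have "(\<Sum>j\<in>UNIV. \<alpha> j * v j) = Q\<^sup>2"
    proof -
      have "(\<Sum>j\<in>UNIV. \<alpha> j * v j) = (\<Sum>j\<in>UNIV. (\<alpha> j)\<^sup>2)"
        by (rule sum.cong) (auto simp: \<alpha>_def power2_eq_square)
      thus ?thesis by (simp add: Q_def l2_def sum_nonneg)
    qed
    moreover have "(\<Sum>j\<in>UNIV. \<alpha> j * v j) = 2 * En n (\<lambda>i. w i * xdot x i \<alpha>)"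
      unfolding En_xdot_swap by (simp add: v_def sum_distrib_left mult_ac)
    moreover have "En n (\<lambda>i. w i * xdot x i \<alpha>) \<le> sqrt (En n (\<lambda>i. (w i)\<^sup>2)) * norm2n n x \<alpha>"
      using En_CS[OF n_pos, of w "\<lambda>i. xdot x i \<alpha>"] by (simp add: norm2n_def)
    moreover have Nw: "sqrt (En n (\<lambda>i. (w i)\<^sup>2)) \<le> cs + \<nu>"
    proof -
      have "sqrt (En n (\<lambda>i. (r i + - xdot x i \<delta>)\<^sup>2)) \<le> sqrt (En n (\<lambda>i. (r i)\<^sup>2)) + sqrt (En n (\<lambda>i. (- xdot x i \<delta>)\<^sup>2))"
        by (rule En_Mink)
      thus ?thesis by (simp add: w_def cs_def \<nu>_def norm2n_def)
    qed
    moreover have Na: "norm2n n x \<alpha> \<le> sqrt P * Q"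
    proof -
      have an: "\<alpha> \<noteq> (\<lambda>_. 0)"
      proof
        assume "\<alpha> = (\<lambda>_. 0)"
        hence "Q = 0" by (simp add: Q_def l2_def)
        thus False using Qpos by simp
      qed
      have "supp \<alpha> - T \<subseteq> J" by (auto simp: supp_def \<alpha>_def split: if_splits)
      hence "card (supp \<alpha> - T) \<le> m" unfolding m_def by (rule card_mono[OF finJ])
      hence "(norm2n n x \<alpha>)\<^sup>2 / Q\<^sup>2 \<le> P" unfolding P_def Q_def using phi_ge[where x=x and n=n, OF normalized an] by simp
      hence "(norm2n n x \<alpha>)\<^sup>2 \<le> P * Q\<^sup>2" using Qpos by (simp add: pos_divide_le_eq)
      hence "norm2n n x \<alpha> \<le> sqrt (P * Q\<^sup>2)" by (rule real_le_rsqrt)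
      thus ?thesis using Q0 by (simp add: real_sqrt_mult)
    qed
    moreover have "norm2n n x \<alpha> \<ge> 0" by (simp add: norm2n_def En_sq_nonneg)
    moreover have "sqrt P \<ge> 0"
    proof -
      have "0 \<le> norm2n n x \<alpha>" by (simp add: norm2n_def En_sq_nonneg)
      hence "0 \<le> sqrt P * Q" using Na by linarith
      thus ?thesis using Qpos by (simp add: zero_le_mult_iff)
    qed
    ultimately have "Q\<^sup>2 \<le> 2 * ((cs + \<nu>) * (sqrt P * Q))"
      by (smt (verit) mult_mono cs0 \<nu>0)
    hence "Q * Q \<le> Q * (2 * (cs + \<nu>) * sqrt P)" by (simp add: power2_eq_square mult_ac)
    hence Qle: "Q \<le> 2 * (cs + \<nu>) * sqrt P" using Qpos by (simp add: mult_le_cancel_left_pos)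
    have qP: "sqrt P \<ge> 0" using \<open>sqrt P \<ge> 0\<close> .
    have "sqrt (real m) * M \<le> 2 * sqrt P * (cs + \<nu>)" using sqm Qle by (simp add: mult_ac)
    also have "\<dots> \<le> 2 * sqrt P * (3 * cs + (1 + 1 / c) * L * (sqrt (real s) / \<kappa>))"
      by (rule mult_left_mono) (use D qP in auto)
    finally have main: "sqrt (real m) * M \<le> 2 * sqrt P * (3 * cs + (1 + 1 / c) * L * (sqrt (real s) / \<kappa>))" .
    define Z where "Z = sqrt (real s) / \<kappa>"
    have "sqrt (real m) \<le> 2 * sqrt P * (3 * cs + (1 + 1 / c) * L * Z) / M"
      using main M0 by (simp add: pos_le_divide_eq Z_def)
    also have "\<dots> = sqrt P * (3 * cs) * (2 / M) + 2 * sqrt P * Z * ((1 + 1 / c) * L / M)"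
      using M0 by (simp add: field_simps)
    also have "2 / M = (cbar + 1) / L"
    proof -
      have "c - 1 \<noteq> 0" "c \<noteq> 0" "L \<noteq> 0" using c_gt L0 by auto
      thus ?thesis by (simp add: M_def cbar_def field_simps)
    qed
    also have "(1 + 1 / c) * L / M = cbar"
    proof -
      have "c - 1 \<noteq> 0" "c \<noteq> 0" "L \<noteq> 0" using c_gt L0 by auto
      thus ?thesis by (simp add: M_def cbar_def field_simps)
    qed
    also have "sqrt P * (3 * cs) * ((cbar + 1) / L) + 2 * sqrt P * Z * cbar
        = 2 * cbar * sqrt P * Z + 3 * (cbar + 1) * sqrt P * (real n * cs / lam)"
      using n_pos by (simp add: L_def field_simps)
    also have "\<dots> = sqrt (real s) * sqrt P * (2 * cbar / \<kappa>) + 3 * (cbar + 1) * sqrt P * (real n * cs / lam)"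
      by (simp add: Z_def mult_ac)
    finally show ?thesis .
  qed
  show ?thesis
    using fin unfolding Let_def P_def m_def J_def s_def T_def cbar_def cs_def r_def \<kappa>_def .

qed
end
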